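(* For every nonnegative integer $n$, $$\sum_{k=0}^{\infty}(-1)^k(4k+1)\,\frac{(-2n)_k\,(-3n-\tfrac14)_k\,(\tfrac12)_k}{k!\,(2n+\tfrac32)_k\,(3n+\tfrac74)_k}=\left(\frac{2^2 3^3}{5^5}\right)^n\frac{(\tfrac{11}{12})_n(\tfrac{7}{12})_n(\tfrac54)_n^2}{(\tfrac{11}{20})_n(\tfrac{19}{20})_n(\tfrac{23}{20})_n(\tfrac{7}{20})_n}.$$ (The sum is finite, since $(-2n)_k=0$ for $k>2n$.)
   Context: $(a)_j=\Gamma(a+j)/\Gamma(a)=a(a+1)\cdots(a+j-1)$ denotes the rising factorial (Pochhammer symbol), with $(a)_0=1$. *)

theory Defs
  imports "HOL-Analysis.Analysis"
begin

end

theory Submission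
  imports Defs
begin

definition Fn :: "nat \<Rightarrow> nat \<Rightarrow> real" where
"Fn n k = (-1::real) ^ k * (4 * real k + 1) *
            (pochhammer (- 2 * real n) k * pochhammer (- 3 * real n - 1/4) k * pochhammer (1/2) k)
          / (fact k * pochhammer (2 * real n + 3/2) k * pochhammer (3 * real n + 7/4) k)"

definition Rn :: "nat \<Rightarrow> real" where
"Rn n = ((2^2 * 3^3) / 5^5) ^ n *
         (pochhammer (11/12) n * pochhammer (7/12) n * (pochhammer (5/4) n)^2)
         / (pochhammer (11/20) n * pochhammer (19/20) n * pochhammer (23/20) n * pochhammer (7/20) n)"

definition Hn :: "nat \<Rightarrow> nat \<Rightarrow> real" where
"Hn n k = (-1::real) ^ k *
            (pochhammer (- 2 * real n - 2) k * pochhammer (- 3 * real n - 1/4 - 3) k * pochhammer (1/2) k)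
          / (fact k * pochhammer (2 * real n + 3/2 + 2) k * pochhammer (3 * real n + 7/4 + 3) k)"

definition Wp :: "real \<Rightarrow> real \<Rightarrow> real" where
"Wp x y = ((-1696793175) + (-25676063430) * x^1 + (-171014345592) * x^2 + (-660708758784) * x^3 + (-1640832806400) * x^4 + (-2738651040768) * x^5 + (-3112980688896) * x^6 + (-2380883951616) * x^7 + (-1173263155200) * x^8 + (-336575987712) * x^9 + (-42707976192) * x^10) * y^1 + ((-1393251900) + (-19219525180) * x^1 + (-115932927008) * x^2 + (-401113961344) * x^3 + (-877086216704) * x^4 + (-1256976855040) * x^5 + (-1180784156672) * x^6 + (-701210591232) * x^7 + (-238914502656) * x^8 + (-35589980160) * x^9) * y^2 + ((130786528) + (1411748256) * x^1 + (6222708224) * x^2 + (14318360064) * x^3 + (17768689664) * x^4 + (9971589120) * x^5 + (-919076864) * x^6 + (-3772121088) * x^7 + (-1274019840) * x^8) * y^3 + ((444040712) + (4422497056) * x^1 + (18928345216) * x^2 + (44895789568) * x^3 + (63528687616) * x^4 + (53507416064) * x^5 + (24795774976) * x^6 + (4869980160) * x^7) * y^4 + ((16846624) + (130981632) * x^1 + (540220928) * x^2 + (1318330368) * x^3 + (1845157888) * x^4 + (1356791808) * x^5 + (406978560) * x^6) * y^5 + ((-106843520) + (-699996672) * x^1 + (-1875136512) * x^2 + (-2540158976) * x^3 + (-1731035136) * x^4 + (-472514560) * x^5) * y^6 + ((-15672832) + (-76627968) * x^1 + (-158482432) * x^2 + (-156499968) * x^3 + (-62259200) * x^4) * y^7 +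 ((12851200) + (47177728) * x^1 + (60850176) * x^2 + (26869760) * x^3) * y^8 + ((2646016) + (6094848) * x^1 + (4587520) * x^2) * y^9 + ((-557056) + (-655360) * x^1) * y^10 + ((-131072)) * y^11"

definition Aa :: "real \<Rightarrow> real" where
"Aa x = ((-2*x)-2)*((-2*x)-1)*((-3*x-1/4)-3)*((-3*x-1/4)-2)*((-3*x-1/4)-1)"
definition Cc :: "real \<Rightarrow> real" where
"Cc x = (2*x+3/2)*(2*x+3/2+1)*(3*x+7/4)*(3*x+7/4+1)*(3*x+7/4+2)"
definition Ee :: "real \<Rightarrow> real \<Rightarrow> real" where
"Ee x y = (-2*x+y-2)*(-2*x+y-1)*(-3*x-1/4+y-3)*(-3*x-1/4+y-2)*(-3*x-1/4+y-1)"
definition D5 :: "real \<Rightarrow> real \<Rightarrow> real" where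
"D5 x y = (2*x+3/2+y)*(2*x+3/2+y+1)*(3*x+7/4+y)*(3*x+7/4+y+1)*(3*x+7/4+y+2)"
definition den3 :: "real \<Rightarrow> real \<Rightarrow> real" where
"den3 x y = (y+1)*(2*x+3/2+2+y)*(3*x+7/4+3+y)"
definition num3 :: "real \<Rightarrow> real \<Rightarrow> real" where
"num3 x y = (-2*x-2+y)*(-3*x-1/4-3+y)*(1/2+y)"
definition Dn :: "real \<Rightarrow> real" where
"Dn x = (2*x+1)*(x+1)*(12*x+5)*(12*x+13)*(4*x+3)^2"
definition Qn :: "real \<Rightarrow> real" where
"Qn x = 5*(20*x+11)*(20*x+19)*(20*x+23)*(20*x+7)"
definition P0 :: "real \<Rightarrow> real" where
"P0 x = 12*(12*x+11)*(12*x+7)*(4*x+5)^2"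

lemma poly_id:
  fixes x y :: real
  shows "(4*y+1)*((6*Dn x*Qn x)*(Aa x*Cc x)*den3 x y - (6*Dn x*P0 x)*Ee x y*D5 x y*den3 x y)
     = - num3 x y*(Aa x*Cc x)*Wp x (y+1) - den3 x y*(Aa x*Cc x)*Wp x y"
  unfolding Wp_def Aa_def Cc_def Ee_def D5_def den3_def num3_def Dn_def Qn_def P0_def
  by algebra

lemma poch2: "pochhammer (z::real) k * (z + of_nat k) * (z + of_nat k + 1) = z*(z+1)*pochhammer (z+2) k"
proof -
  have "pochhammer z (Suc (Suc k)) = (z + of_nat (Suc k)) * ((z + of_nat k) * pochhammer z k)"
    by (simp only: pochhammer_rec')
  moreover have "pochhammer z (Suc (Suc k)) = z * ((z+1) * pochhammer (z+1+1) k)"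
    by (simp only: pochhammer_rec)
  ultimately show ?thesis by (simp add: algebra_simps)
qed

lemma poch3: "pochhammer (z::real) k * (z + of_nat k) * (z + of_nat k + 1) * (z + of_nat k + 2)
   = z*(z+1)*(z+2)*pochhammer (z+3) k"
proof -
  have "pochhammer z (Suc (Suc (Suc k))) = (z + of_nat (Suc (Suc k))) * ((z + of_nat (Suc k)) * ((z + of_nat k) * pochhammer z k))"
    by (simp only: pochhammer_rec')
  moreover have "pochhammer z (Suc (Suc (Suc k))) = z * ((z+1) * ((z+1+1) * pochhammer (z+1+1+1) k))"
    by (simp only: pochhammer_rec)
  ultimately show ?thesis by (simp add: algebra_simps)
qed

lemma poch_pos_ne: "(z::real) > 0 \<Longrightarrow> pochhammer z k \<noteq> 0"
  using pochhammer_pos[of z k] by simp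

lemma L1: "Fn (Suc n) k = (4 * real k + 1) * Hn n k"
proof -
  have e1: "- 2 * real (Suc n) = - 2 * real n - 2" by simp
  have e2: "- 3 * real (Suc n) - 1/4 = - 3 * real n - 1/4 - 3" by simp
  have e3: "2 * real (Suc n) + 3/2 = 2 * real n + 3/2 + 2" by simp
  have e4: "3 * real (Suc n) + 7/4 = 3 * real n + 7/4 + 3" by simp
  show ?thesis unfolding Fn_def Hn_def e1 e2 e3 e4 by simp
qed

lemma L2: "Fn n k * (Aa (real n) * Cc (real n)) = (4 * real k + 1) * Hn n k * Ee (real n) (real k) * D5 (real n) (real k)"
proof -
  define x where "x = real n"
  define y where "y = real k"
  have x0: "x \<ge> 0" unfolding x_def by simp
  have y0: "y \<ge> 0" unfolding y_def by simp
  define Pa where "Pa = pochhammer (- 2 * x) k"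
  define Pb where "Pb = pochhammer (- 3 * x - 1/4) k"
  define Pc where "Pc = pochhammer (2 * x + 3/2) k"
  define Pd where "Pd = pochhammer (3 * x + 7/4) k"
  define Pa' where "Pa' = pochhammer (- 2 * x - 2) k"
  define Pb' where "Pb' = pochhammer (- 3 * x - 1/4 - 3) k"
  define Pc' where "Pc' = pochhammer (2 * x + 3/2 + 2) k"
  define Pd' where "Pd' = pochhammer (3 * x + 7/4 + 3) k"
  define Ph where "Ph = pochhammer (1/2::real) k"
  define s where "s = (-1::real)^k"
  have hA: "Pa' * (- 2 * x - 2 + y) * (- 2 * x - 2 + y + 1) = (- 2 * x - 2) * (- 2 * x - 2 + 1) * Pa"
    using poch2[of "- 2 * x - 2" k] unfolding Pa_def Pa'_def y_def by simp
  have hB: "Pb' * (- 3 * x - 1/4 - 3 + y) * (- 3 * x - 1/4 - 3 + y + 1) * (- 3 * x - 1/4 - 3 + y + 2)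
      = (- 3 * x - 1/4 - 3) * (- 3 * x - 1/4 - 3 + 1) * (- 3 * x - 1/4 - 3 + 2) * Pb"
  proof -
    have arg: "- 3 * x - 1/4 - 3 + 3 = - 3 * x - 1/4" by simp
    show ?thesis using poch3[of "- 3 * x - 1/4 - 3" k] unfolding Pb_def Pb'_def y_def by (simp only: arg)
  qed
  have hC: "Pc * (2 * x + 3/2 + y) * (2 * x + 3/2 + y + 1) = (2 * x + 3/2) * (2 * x + 3/2 + 1) * Pc'"
    using poch2[of "2 * x + 3/2" k] unfolding Pc_def Pc'_def y_def by simp
  have hD: "Pd * (3 * x + 7/4 + y) * (3 * x + 7/4 + y + 1) * (3 * x + 7/4 + y + 2) = (3 * x + 7/4) * (3 * x + 7/4 + 1) * (3 * x + 7/4 + 2) * Pd'"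
    using poch3[of "3 * x + 7/4" k] unfolding Pd_def Pd'_def y_def by simp
  have eAB: "Aa x * (Pa * Pb) = Pa' * Pb' * Ee x y"
  proof -
    have "Aa x * (Pa * Pb) = ((- 2 * x - 2) * (- 2 * x - 2 + 1) * Pa) * ((- 3 * x - 1/4 - 3) * (- 3 * x - 1/4 - 3 + 1) * (- 3 * x - 1/4 - 3 + 2) * Pb)"
      unfolding Aa_def by algebra
    also have "\<dots> = (Pa' * (- 2 * x - 2 + y) * (- 2 * x - 2 + y + 1)) * (Pb' * (- 3 * x - 1/4 - 3 + y) * (- 3 * x - 1/4 - 3 + y + 1) * (- 3 * x - 1/4 - 3 + y + 2))"
      using hA hB by simp
    also have "\<dots> = Pa' * Pb' * Ee x y" unfolding Ee_def by algebra
    finally show ?thesis .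
  qed
  have eCD: "Pc * Pd * D5 x y = Cc x * Pc' * Pd'"
  proof -
    have "Pc * Pd * D5 x y = (Pc * (2 * x + 3/2 + y) * (2 * x + 3/2 + y + 1)) * (Pd * (3 * x + 7/4 + y) * (3 * x + 7/4 + y + 1) * (3 * x + 7/4 + y + 2))"
      unfolding D5_def by algebra
    also have "\<dots> = ((2 * x + 3/2) * (2 * x + 3/2 + 1) * Pc') * ((3 * x + 7/4) * (3 * x + 7/4 + 1) * (3 * x + 7/4 + 2) * Pd')"
      using hC hD by simp
    also have "\<dots> = Cc x * Pc' * Pd'" unfolding Cc_def by algebra
    finally show ?thesis .
  qed
  have nz: "Pc \<noteq> 0" "Pd \<noteq> 0" "Pc' \<noteq> 0" "Pd' \<noteq> 0" "(fact k :: real) \<noteq> 0"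
    unfolding Pc_def Pd_def Pc'_def Pd'_def using x0 by (auto intro!: poch_pos_ne)
  have F: "Fn n k = s * (4*y+1) * (Pa * Pb * Ph) / (fact k * Pc * Pd)"
    unfolding Fn_def s_def Pa_def Pb_def Pc_def Pd_def Ph_def x_def y_def ..
  have H: "Hn n k = s * (Pa' * Pb' * Ph) / (fact k * Pc' * Pd')"
    unfolding Hn_def s_def Pa'_def Pb'_def Pc'_def Pd'_def Ph_def x_def ..
  have "Fn n k * (Aa x * Cc x) = s * (4*y+1) * Ph * (Aa x * (Pa * Pb)) * Cc x / (fact k * Pc * Pd)"
    unfolding F by (simp add: field_simps)
  also have "\<dots> = s * (4*y+1) * Ph * (Pa' * Pb' * Ee x y) * Cc x / (fact k * Pc * Pd)"
    unfolding eAB ..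
  also have "\<dots> = s * (4*y+1) * Ph * (Pa' * Pb' * Ee x y) * (Cc x / (fact k * Pc * Pd))"
    by simp
  also have "Cc x / (fact k * Pc * Pd) = D5 x y / (fact k * Pc' * Pd')"
  proof -
    have "Cc x * (fact k * Pc' * Pd') = fact k * (Cc x * Pc' * Pd')" by (simp add: ac_simps)
    also have "\<dots> = fact k * (Pc * Pd * D5 x y)" by (simp add: eCD)
    also have "\<dots> = D5 x y * (fact k * Pc * Pd)" by (simp add: ac_simps)
    finally show ?thesis using nz by (simp add: frac_eq_eq)
  qed
  also have "s * (4*y+1) * Ph * (Pa' * Pb' * Ee x y) * (D5 x y / (fact k * Pc' * Pd')) = s * (4*y+1) * Ph * (Pa' * Pb' * Ee x y) * D5 x y / (fact k * Pc' * Pd')"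
    by simp
  also have "\<dots> = (4 * y + 1) * Hn n k * Ee x y * D5 x y"
    unfolding H using nz by (simp add: field_simps)
  finally show ?thesis unfolding x_def y_def .
qed


lemma ratio_gen:
  fixes s1 pa pb ph pc pd ff aa bb cc dd hh yy :: real
  assumes "ff\<noteq>0" "pc\<noteq>0" "pd\<noteq>0" "yy+1\<noteq>0" "cc+yy\<noteq>0" "dd+yy\<noteq>0"
  shows "((-1) * s1 * ((aa+yy)*pa*((bb+yy)*pb)*((hh+yy)*ph)) / ((yy+1)*ff*((cc+yy)*pc)*((dd+yy)*pd))) * ((yy+1)*(cc+yy)*(dd+yy))
     = - (s1 * (pa*pb*ph)/(ff*pc*pd)) * ((aa+yy)*(bb+yy)*(hh+yy))"
proof -
  have "(yy+1)*(cc+yy)*(dd+yy) \<noteq> 0" using assms by simp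
  then have "((-1) * s1 * ((aa+yy)*pa*((bb+yy)*pb)*((hh+yy)*ph)) / ((yy+1)*ff*((cc+yy)*pc)*((dd+yy)*pd))) * ((yy+1)*(cc+yy)*(dd+yy))
    = ((-1) * s1 * ((aa+yy)*(bb+yy)*(hh+yy)) * (pa*pb*ph)) * ((yy+1)*(cc+yy)*(dd+yy)) / ((ff*pc*pd) * ((yy+1)*(cc+yy)*(dd+yy)))"
    by (simp add: ac_simps)
  also have "\<dots> = ((-1) * s1 * ((aa+yy)*(bb+yy)*(hh+yy)) * (pa*pb*ph)) / (ff*pc*pd)"
    using \<open>(yy+1)*(cc+yy)*(dd+yy) \<noteq> 0\<close> by simp
  also have "\<dots> = - (s1 * (pa*pb*ph)/(ff*pc*pd)) * ((aa+yy)*(bb+yy)*(hh+yy))"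
    by (simp add: ac_simps)
  finally show ?thesis .
qed

lemma L3: "Hn n (Suc k) * den3 (real n) (real k) = - Hn n k * num3 (real n) (real k)"
proof -
  define x where "x = real n"
  define y where "y = real k"
  have x0: "x \<ge> 0" unfolding x_def by simp
  have y0: "y \<ge> 0" unfolding y_def by simp
  have nz: "pochhammer (2 * x + 3/2 + 2) k \<noteq> 0" "pochhammer (3 * x + 7/4 + 3) k \<noteq> 0"
    "(fact k :: real) \<noteq> 0" "y + 1 \<noteq> 0" "2 * x + 3/2 + 2 + y \<noteq> 0" "3 * x + 7/4 + 3 + y \<noteq> 0"
    using x0 y0 by (auto intro!: poch_pos_ne)
  have hS: "Hn n (Suc k) = (-1) * (-1::real) ^ k *
            ((- 2 * x - 2 + y) * pochhammer (- 2 * x - 2) k * ((- 3 * x - 1/4 - 3 + y) * pochhammer (- 3 * x - 1/4 - 3) k) * ((1/2 + y) * pochhammer (1/2) k))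
          / ((y + 1) * fact k * ((2 * x + 3/2 + 2 + y) * pochhammer (2 * x + 3/2 + 2) k) * ((3 * x + 7/4 + 3 + y) * pochhammer (3 * x + 7/4 + 3) k))"
    unfolding Hn_def x_def y_def by (simp only: pochhammer_rec' fact_Suc power_Suc of_nat_mult of_nat_Suc) (simp add: algebra_simps)
  have hK: "Hn n k = (-1::real) ^ k * (pochhammer (- 2 * x - 2) k * pochhammer (- 3 * x - 1/4 - 3) k * pochhammer (1/2) k)
          / (fact k * pochhammer (2 * x + 3/2 + 2) k * pochhammer (3 * x + 7/4 + 3) k)"
    unfolding Hn_def x_def ..
  have "Hn n (Suc k) * den3 x y = - Hn n k * num3 x y"
    unfolding hS hK den3_def num3_def
    by (rule ratio_gen[OF nz(3,1,2,4,5,6)])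
  then show ?thesis unfolding x_def y_def .
qed

lemma combine:
  fixes X HS Fs Fn AC den num E D5 DQ DP W0 W1 f :: real
  assumes "Fs = f*X" "Fn*AC = f*X*E*D5" "HS*den = -X*num" "AC \<noteq> 0" "den \<noteq> 0"
    and "f*(DQ*AC*den - DP*E*D5*den) = -num*AC*W1 - den*AC*W0"
  shows "DQ*Fs - DP*Fn = HS*W1 - X*W0"
proof -
  have "(DQ*Fs - DP*Fn)*(AC*den) = X*(f*(DQ*AC*den - DP*E*D5*den))"
  proof -
    have "(DQ*Fs - DP*Fn)*(AC*den) = DQ*Fs*AC*den - DP*(Fn*AC)*den" by (simp add: algebra_simps)
    also have "\<dots> = X*(f*(DQ*AC*den - DP*E*D5*den))" using assms(1,2) by (simp add: algebra_simps)
    finally show ?thesis .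
  qed
  also have "\<dots> = X*(-num*AC*W1 - den*AC*W0)" using assms(6) by simp
  also have "\<dots> = (HS*W1 - X*W0)*(AC*den)"
  proof -
    have "(HS*W1 - X*W0)*(AC*den) = (HS*den)*AC*W1 - X*W0*AC*den" by (simp add: algebra_simps)
    also have "\<dots> = X*(-num*AC*W1 - den*AC*W0)" using assms(3) by (simp add: algebra_simps)
    finally show ?thesis by simp
  qed
  finally show ?thesis using assms(4,5) by simp
qed

lemma real_Suc_eq: "real (Suc k) = real k + 1" by simp

definition Gn :: "nat \<Rightarrow> nat \<Rightarrow> real" where
"Gn n k = Hn n k * Wp (real n) (real k)"

lemma Aa_nz: "Aa (real n) \<noteq> 0"
proof -
  have "(- 2 * real n - 2) < 0" "(- 2 * real n - 1) < 0" "(- 3 * real n - 1/4 - 3) < 0"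
    "(- 3 * real n - 1/4 - 2) < 0" "(- 3 * real n - 1/4 - 1) < 0" by auto
  then show ?thesis unfolding Aa_def by (simp del: mult_minus_left)
qed

lemma Cc_nz: "Cc (real n) \<noteq> 0"
  unfolding Cc_def by (simp add: add_pos_nonneg) 

lemma den3_nz: "den3 (real n) (real k) \<noteq> 0"
  unfolding den3_def by (simp add: add_pos_nonneg)

lemma key: "6*Dn (real n)*Qn (real n) * Fn (Suc n) k - 6*Dn (real n)*P0 (real n) * Fn n k = Gn n (Suc k) - Gn n k"
  unfolding Gn_def real_Suc_eq
  by (rule combine[OF L1 L2 L3 _ den3_nz poly_id]) (simp add: Aa_nz Cc_nz)


lemma Fn_zero: "2*n < k \<Longrightarrow> Fn n k = 0"
proof -
  assume a: "2*n < k"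
  have e: "- 2 * real n = - of_nat (2*n)" by simp
  have "pochhammer (- 2 * real n) k = 0" unfolding e using a by (rule pochhammer_of_nat_eq_0_lemma)
  then show ?thesis unfolding Fn_def by simp
qed

lemma Hn_zero: "Hn n (2*n+3) = 0"
proof -
  have e: "- 2 * real n - 2 = - of_nat (2*n+2)" by simp
  have "pochhammer (- 2 * real n - 2) (2*n+3) = 0" unfolding e by (rule pochhammer_of_nat_eq_0_lemma) simp
  then show ?thesis unfolding Hn_def by simp
qed

lemma sum_Fn: "2*m < N \<Longrightarrow> suminf (Fn m) = sum (Fn m) {..<N}"
  by (rule suminf_finite) (auto intro!: Fn_zero)

lemma Gn0: "Gn n 0 = 0" unfolding Gn_def Wp_def by simp

lemma Gn_end: "Gn n (2*n+3) = 0" unfolding Gn_def Hn_zero by simp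

lemma Dn_pos: "Dn (real n) > 0" unfolding Dn_def by (simp add: add_pos_nonneg)
lemma Qn_pos: "Qn (real n) > 0" unfolding Qn_def by (simp add: add_pos_nonneg)

lemma S_rec: "6*Dn (real n)*Qn (real n) * suminf (Fn (Suc n)) = 6*Dn (real n)*P0 (real n) * suminf (Fn n)"
proof -
  define N where "N = 2*n+3"
  have "(\<Sum>k<N. 6*Dn (real n)*Qn (real n) * Fn (Suc n) k - 6*Dn (real n)*P0 (real n) * Fn n k) = (\<Sum>k<N. Gn n (Suc k) - Gn n k)"
    by (simp only: key)
  also have "\<dots> = 0" unfolding sum_lessThan_telescope N_def Gn0 Gn_end by simp
  finally have "(\<Sum>k<N. 6*Dn (real n)*Qn (real n) * Fn (Suc n) k) - (\<Sum>k<N. 6*Dn (real n)*P0 (real n) * Fn n k) = 0"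
    by (simp only: sum_subtractf)
  then have "6*Dn (real n)*Qn (real n) * sum (Fn (Suc n)) {..<N} = 6*Dn (real n)*P0 (real n) * sum (Fn n) {..<N}"
    by (simp only: sum_distrib_left[symmetric])
  moreover have "suminf (Fn (Suc n)) = sum (Fn (Suc n)) {..<N}" by (rule sum_Fn) (simp add: N_def)
  moreover have "suminf (Fn n) = sum (Fn n) {..<N}" by (rule sum_Fn) (simp add: N_def)
  ultimately show ?thesis by simp
qed

lemma R_gen0:
  fixes p1 p2 p3 q1 q2 q3 q4 t a1 a2 a3 a4 b1 b2 b3 :: real
  assumes "q1 \<noteq> 0" "q2 \<noteq> 0" "q3 \<noteq> 0" "q4 \<noteq> 0" "a1 \<noteq> 0" "a2 \<noteq> 0" "a3 \<noteq> 0" "a4 \<noteq> 0"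
  shows "(800000 * (a1*a2*a3*a4)) * (((2^2 * 3^3) / 5^5) * t * ((b1 * p1) * (b2 * p2) * (b3 * p3)^2)
         / ((a1 * q1) * (a2 * q2) * (a3 * q3) * (a4 * q4)))
    = (27648 * (b1*b2*b3^2)) * (t * (p1 * p2 * p3^2) / (q1 * q2 * q3 * q4))"
  using assms by (simp add: field_simps power2_eq_square)

lemma R_gen:
  fixes x p1 p2 p3 q1 q2 q3 q4 t :: real
  assumes "q1 \<noteq> 0" "q2 \<noteq> 0" "q3 \<noteq> 0" "q4 \<noteq> 0" "x \<ge> 0"
  shows "Qn x * (((2^2 * 3^3) / 5^5) * t * (((11/12 + x) * p1) * ((7/12 + x) * p2) * ((5/4 + x) * p3)^2)
         / (((11/20 + x) * q1) * ((19/20 + x) * q2) * ((23/20 + x) * q3) * ((7/20 + x) * q4)))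
    = P0 x * (t * (p1 * p2 * p3^2) / (q1 * q2 * q3 * q4))"
proof -
  have nz: "11/20 + x \<noteq> 0" "19/20 + x \<noteq> 0" "23/20 + x \<noteq> 0" "7/20 + x \<noteq> 0" using assms(5) by auto
  have q: "Qn x = 800000 * ((11/20+x)*(19/20+x)*(23/20+x)*(7/20+x))" unfolding Qn_def by algebra
  have p: "P0 x = 27648 * ((11/12+x)*(7/12+x)*(5/4+x)^2)" unfolding P0_def by algebra
  show ?thesis unfolding q p by (rule R_gen0[OF assms(1-4) nz])
qed

lemma Rn_rec: "Qn (real n) * Rn (Suc n) = P0 (real n) * Rn n"
proof -
  have nz: "pochhammer (11/20::real) n \<noteq> 0" "pochhammer (19/20::real) n \<noteq> 0" "pochhammer (23/20::real) n \<noteq> 0" "pochhammer (7/20::real) n \<noteq> 0"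
    by (auto intro!: poch_pos_ne)
  have "Rn (Suc n) = ((2^2 * 3^3) / 5^5) * ((2^2 * 3^3) / 5^5) ^ n * (((11/12 + real n) * pochhammer (11/12) n) * ((7/12 + real n) * pochhammer (7/12) n) * ((5/4 + real n) * pochhammer (5/4) n)^2)
         / (((11/20 + real n) * pochhammer (11/20) n) * ((19/20 + real n) * pochhammer (19/20) n) * ((23/20 + real n) * pochhammer (23/20) n) * ((7/20 + real n) * pochhammer (7/20) n))"
    unfolding Rn_def by (simp only: pochhammer_rec' power_Suc)
  then show ?thesis unfolding Rn_def by (simp only: R_gen[OF nz of_nat_0_le_iff])
qed

lemma main: "suminf (Fn n) = Rn n"
proof (induction n)
  case 0
  have "suminf (Fn 0) = sum (Fn 0) {..<1}" by (rule sum_Fn) simp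
  moreover have "Fn 0 0 = 1" by (simp add: Fn_def)
  ultimately have "suminf (Fn 0) = 1" by simp
  moreover have "Rn 0 = 1" by (simp add: Rn_def)
  ultimately show ?case by simp
next
  case (Suc n)
  have pos: "Dn (real n) \<noteq> 0" "Qn (real n) \<noteq> 0" using Dn_pos[of n] Qn_pos[of n] by auto
  have "6*Dn (real n)*Qn (real n) * suminf (Fn (Suc n)) = 6*Dn (real n)*(P0 (real n) * suminf (Fn n))"
    using S_rec[of n] by (simp add: ac_simps)
  also have "\<dots> = 6*Dn (real n)*(Qn (real n) * Rn (Suc n))" using Rn_rec[of n] Suc.IH by simp
  finally show ?case using pos by simp
qed

theorem theorem9:
  fixes n :: nat
  shows "(\<Sum>k. (-1::real) ^ k * (4 * real k + 1) *
            (pochhammer (- 2 * real n) k * pochhammer (- 3 * real n - 1/4) k * pochhammer (1/2) k)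
          / (fact k * pochhammer (2 * real n + 3/2) k * pochhammer (3 * real n + 7/4) k))
       = ((2^2 * 3^3) / 5^5) ^ n *
         (pochhammer (11/12) n * pochhammer (7/12) n * (pochhammer (5/4) n)^2)
         / (pochhammer (11/20) n * pochhammer (19/20) n * pochhammer (23/20) n * pochhammer (7/20) n)"
  using main[of n] unfolding Fn_def Rn_def .

end
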